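(* For every $p\in[0,1]$, \[ p \le \tfrac12\Big(1+\sqrt{1-h(p)^{\ln 4}}\Big), \] where $h(p) = p\log_2\frac1p + (1-p)\log_2\frac1{1-p}$ (with $0\log_2\frac10 = 0$). *)

theory Defs
  imports Complex_Main
begin

definition binary_entropy :: "real \<Rightarrow> real" where
  "binary_entropy p =
     (if p = 0 then 0 else p * log 2 (1 / p)) +
     (if 1 - p = 0 then 0 else (1 - p) * log 2 (1 / (1 - p)))"

end

theory Submission imports Defs "HOL-Real_Asymp.Real_Asymp" begin

definition AA :: "real \<Rightarrow> real" where "AA x = ln ((1+x)/2) - ln ((1-x)/2)"
definition HH :: "real \<Rightarrow> real" where
  "HH x = - ((1-x)/2) * ln ((1-x)/2) - ((1+x)/2) * ln ((1+x)/2)"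
definition cc :: real where "cc = 1 / (2 * ln 2)"
definition psi :: "real \<Rightarrow> real" where "psi x = (1-x^2) * AA x / 4 - cc * x * HH x"
definition dpsi :: "real \<Rightarrow> real" where "dpsi x = 1/2 - cc * HH x - (1-cc) * x * AA x / 2"
definition chi :: "real \<Rightarrow> real" where "chi x = (2*cc-1) * (1-x^2) * AA x / 2 - (1-cc) * x"
definition dchi :: "real \<Rightarrow> real" where "dchi x = (2*cc-1) * (1 - x * AA x) - (1-cc)"

lemma nz: fixes x :: real assumes "-1 < x" "x < 1" shows "1 - x \<noteq> 0" "1 + x \<noteq> 0" "1 - x^2 \<noteq> 0" "1 - x^2 > 0"
proof -
  have "x^2 < 1" using assms by (simp add: abs_square_less_1)
  then show "1 - x \<noteq> 0" "1 + x \<noteq> 0" "1 - x^2 \<noteq> 0" "1 - x^2 > 0" using assms by auto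
qed

lemma dAA: assumes "-1 < x" "x < 1" shows "(AA has_real_derivative 1/(1+x) + 1/(1-x)) (at x)"
  unfolding AA_def[abs_def]
  apply (rule DERIV_cong)
  using assms apply (auto intro!: derivative_eq_intros)[1]
  using nz[OF assms] by (simp add: field_simps)

lemma dHH: assumes "-1 < x" "x < 1" shows "(HH has_real_derivative - AA x / 2) (at x)"
  unfolding HH_def[abs_def]
  apply (rule DERIV_cong)
  using assms apply (auto intro!: derivative_eq_intros)[1]
  using nz[OF assms] by (simp add: field_simps AA_def)

lemma dpsi: assumes "-1 < x" "x < 1" shows "(psi has_real_derivative dpsi x) (at x)"
  unfolding psi_def[abs_def]
  apply (rule DERIV_cong)
  using assms apply (auto intro!: derivative_eq_intros dAA dHH)[1]
  using nz[OF assms] by (simp add: field_simps dpsi_def power2_eq_square)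

lemma ddpsi: assumes "-1 < x" "x < 1" shows "(dpsi has_real_derivative chi x / ((1-x)*(1+x))) (at x)"
  unfolding dpsi_def[abs_def]
  apply (rule DERIV_cong)
  using assms apply (auto intro!: derivative_eq_intros dAA dHH)[1]
  using nz[OF assms] by (simp add: field_simps chi_def power2_eq_square)

lemma dchi: assumes "-1 < x" "x < 1" shows "(chi has_real_derivative dchi x) (at x)"
  unfolding chi_def[abs_def]
  apply (rule DERIV_cong)
  using assms apply (auto intro!: derivative_eq_intros dAA)[1]
  using nz[OF assms] by (simp add: field_simps dchi_def power2_eq_square)

lemma HH_lim: "(HH \<longlongrightarrow> 0) (at_left 1)"
  unfolding HH_def[abs_def] by real_asymp


lemma step:
  fixes g g' :: "real \<Rightarrow> real"
  assumes der: "\<And>x. 0 \<le> x \<Longrightarrow> x < 1 \<Longrightarrow> (g has_real_derivative g' x) (at x)"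
  and g0: "g 0 = 0"
  and S: "\<And>s t. 0 < s \<Longrightarrow> s < t \<Longrightarrow> t < 1 \<Longrightarrow> g' s < 0 \<Longrightarrow> g' t \<le> 0"
  and st: "0 < s" "s < t" "t < 1" "g s < 0"
  shows "g t \<le> 0"
proof (rule ccontr)
  assume h: "\<not> g t \<le> 0"
  obtain z where z: "0<z" "z<s" "g s - g 0 = (s-0) * g' z"
    using MVT2[of 0 s g g'] der st by auto
  obtain w where w: "s<w" "w<t" "g t - g s = (t-s) * g' w"
    using MVT2[of s t g g'] der st by auto
  have "g' z < 0" using z st g0 by (simp add: mult_less_0_iff)
  moreover have "(t-s) * g' w > 0" using w st h by linarith
  then have "g' w > 0" using st by (simp add: zero_less_mult_iff)
  ultimately show False using S[of z w] z w st by auto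
qed

lemma ln2_le1: "ln (2::real) \<le> 1" using ln_2_less_1 by simp

lemma cc_pos: "cc > 0" unfolding cc_def by simp

lemma cc_ge: "2 * cc - 1 \<ge> 0"
proof -
  have "2 * cc = 1 / ln 2" unfolding cc_def by simp
  also have "\<dots> \<ge> 1" using ln2_le1 by (simp add: field_simps)
  finally show ?thesis by simp
qed

lemma AA_mono: assumes "0 \<le> s" "s \<le> t" "t < 1" shows "AA s \<le> AA t"
  unfolding AA_def using assms by (auto intro!: diff_mono)

lemma AA_nonneg: assumes "0 \<le> s" "s < 1" shows "0 \<le> AA s"
  using AA_mono[of 0 s] assms by (simp add: AA_def)

lemma dchi_mono: assumes "0 \<le> s" "s \<le> t" "t < 1" shows "dchi t \<le> dchi s"
proof -
  have "s * AA s \<le> t * AA t"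
    using assms AA_mono[OF assms] AA_nonneg[of s] by (intro mult_mono) auto
  then have "(2*cc-1)*(s * AA s) \<le> (2*cc-1)*(t * AA t)" using cc_ge by (rule mult_left_mono)
  then show ?thesis unfolding dchi_def by (simp add: algebra_simps)
qed

lemma S_chi: assumes "0 < s" "s < t" "t < 1" "chi s < 0" shows "chi t \<le> 0"
proof (rule step[where g = chi and g' = dchi])
  show "\<And>x. 0 \<le> x \<Longrightarrow> x < 1 \<Longrightarrow> (chi has_real_derivative dchi x) (at x)"
    by (rule dchi) auto
  show "chi 0 = 0" by (simp add: chi_def AA_def)
  show "\<And>s t. 0 < s \<Longrightarrow> s < t \<Longrightarrow> t < 1 \<Longrightarrow> dchi s < 0 \<Longrightarrow> dchi t \<le> 0"
    using dchi_mono by (meson less_imp_le order_le_less_trans not_le)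
qed (use assms in auto)

lemma HH0: "HH 0 = ln 2"
  by (simp add: HH_def ln_div)

lemma S_dpsi: assumes "0 < s" "s < t" "t < 1" "dpsi s < 0" shows "dpsi t \<le> 0"
proof (rule step[where g = dpsi and g' = "\<lambda>x. chi x / ((1-x)*(1+x))"])
  show "\<And>x. 0 \<le> x \<Longrightarrow> x < 1 \<Longrightarrow> (dpsi has_real_derivative chi x / ((1-x)*(1+x))) (at x)"
    by (rule ddpsi) auto
  show "dpsi 0 = 0" by (simp add: dpsi_def HH0 cc_def)
  fix s t :: real assume h: "0 < s" "s < t" "t < 1" "chi s / ((1-s)*(1+s)) < 0"
  have "(1-s)*(1+s) > 0" using h by simp
  then have "chi s < 0" using h(4) by (smt (verit) divide_less_0_iff)
  then have "chi t \<le> 0" using S_chi h by auto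
  moreover have "(1-t)*(1+t) > 0" using h by simp
  ultimately show "chi t / ((1-t)*(1+t)) \<le> 0" by (simp add: divide_nonpos_pos)
qed (use assms in auto)


lemma HH_pos: assumes "-1 < t" "t < 1" shows "HH t > 0"
proof -
  have a: "ln ((1-t)/2) < 0" "ln ((1+t)/2) < 0" using assms by (auto simp: ln_less_zero_iff)
  have "((1-t)/2) * ln ((1-t)/2) < 0" using a assms by (simp add: mult_pos_neg)
  moreover have "((1+t)/2) * ln ((1+t)/2) < 0" using a assms by (simp add: mult_pos_neg)
  ultimately show ?thesis unfolding HH_def by simp
qed

lemma psi_lower: assumes "0 \<le> t" "t < 1" shows "psi t \<ge> - cc * HH t"
proof -
  have "t^2 \<le> 1" using assms by (simp add: power_le_one)
  then have "(1-t^2) * AA t / 4 \<ge> 0" using AA_nonneg[OF assms] by simp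
  moreover have "t * HH t \<le> HH t" using HH_pos[of t] assms by (intro mult_left_le_one_le) auto
  then have "cc * (t * HH t) \<le> cc * HH t" using cc_pos by (intro mult_left_mono) auto
  ultimately show ?thesis unfolding psi_def by (simp add: algebra_simps)
qed

lemma psi_nonneg: assumes "0 \<le> x" "x < 1" shows "psi x \<ge> 0"
proof (rule ccontr)
  assume neg: "\<not> psi x \<ge> 0"
  have psi0: "psi 0 = 0" by (simp add: psi_def AA_def)
  then have x0: "x > 0" using neg assms by (cases "x = 0") auto
  obtain z where z: "0<z" "z<x" "psi x - psi 0 = (x-0) * dpsi z"
    using MVT2[of 0 x psi dpsi] dpsi assms x0 by auto
  have "x * dpsi z < 0" using z neg psi0 by simp
  then have dz: "dpsi z < 0" using x0 by (simp add: mult_less_0_iff)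
  have dec: "psi t \<le> psi x" if tt: "x < t" "t < 1" for t
  proof -
    have "\<And>y. x \<le> y \<Longrightarrow> y \<le> t \<Longrightarrow> (psi has_real_derivative dpsi y) (at y)"
      using dpsi assms tt by auto
    then obtain w where w: "x<w" "w<t" "psi t - psi x = (t-x) * dpsi w"
      using MVT2[of x t psi dpsi] tt by blast
    have "dpsi w \<le> 0" using S_dpsi[of z w] z dz w tt by auto
    then have "(t-x) * dpsi w \<le> 0" using w by (intro mult_nonneg_nonpos) auto
    then show ?thesis using w by linarith
  qed
  have epos: "- psi x / cc > 0" using neg cc_pos by (simp add: divide_neg_pos)
  have ev1: "eventually (\<lambda>t. HH t < - psi x / cc) (at_left 1)"
    using order_tendstoD(2)[OF HH_lim epos] .
  have ev2: "eventually (\<lambda>t. t \<in> {x<..<1}) (at_left 1)"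
    using eventually_at_left_real assms by blast
  obtain t where t: "HH t < - psi x / cc" "t \<in> {x<..<1}"
    using eventually_happens'[OF trivial_limit_at_left_real eventually_conj[OF ev1 ev2]] by blast
  have "cc * HH t < - psi x" using t(1) cc_pos by (simp add: field_simps)
  moreover have "psi t \<ge> - cc * HH t" using psi_lower[of t] t x0 by auto
  moreover have "psi t \<le> psi x" using dec t by auto
  ultimately show False by simp
qed

definition phi :: "real \<Rightarrow> real" where "phi x = cc * ln ((1-x)*(1+x)) - ln (HH x / ln 2)"

lemma dphi: assumes "-1 < x" "x < 1" shows "(phi has_real_derivative 2 * psi x / ((1-x)*(1+x)*HH x)) (at x)"
proof -
  have h: "HH x > 0" using HH_pos assms by auto
  show ?thesis
  unfolding phi_def[abs_def]
  apply (rule DERIV_cong)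
  using assms h apply (auto intro!: derivative_eq_intros dHH)[1]
  using nz[OF assms] h by (simp add: field_simps psi_def power2_eq_square)
qed

lemma phi_nonneg: assumes "0 \<le> x" "x < 1" shows "phi x \<ge> 0"
proof (cases "x = 0")
  case True then show ?thesis by (simp add: phi_def HH0)
next
  case False
  then obtain z where z: "0<z" "z<x" "phi x - phi 0 = (x-0) * (2 * psi z / ((1-z)*(1+z)*HH z))"
    using MVT2[of 0 x phi "\<lambda>z. 2 * psi z / ((1-z)*(1+z)*HH z)"] dphi assms by force
  have "psi z \<ge> 0" using psi_nonneg z assms by auto
  moreover have "(1-z)*(1+z)*HH z > 0" using HH_pos[of z] z assms by simp
  ultimately have "2 * psi z / ((1-z)*(1+z)*HH z) \<ge> 0" by simp
  then have "x * (2 * psi z / ((1-z)*(1+z)*HH z)) \<ge> 0" using z by (intro mult_nonneg_nonneg) auto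
  moreover have "phi 0 = 0" by (simp add: phi_def HH0)
  ultimately show ?thesis using z(3) by simp
qed


lemma HH_even: "HH (-x) = HH x"
  by (simp add: HH_def algebra_simps)

lemma be_eq: assumes "0 < p" "p < 1" shows "binary_entropy p = HH (2*p-1) / ln 2"
proof -
  have a: "(1 - (2*p-1))/2 = 1 - p" "(1 + (2*p-1))/2 = p" by simp_all
  show ?thesis using assms unfolding binary_entropy_def HH_def a
    by (simp add: log_def ln_div field_simps)
qed

lemma ln4: "ln (4::real) = 2 * ln 2"
  using ln_realpow[of 2 2] by simp

lemma main_ineq: assumes "0 \<le> p" "p \<le> 1" shows "binary_entropy p powr ln 4 \<le> 4 * p * (1 - p)"
proof (cases "p = 0 \<or> p = 1")
  case True then show ?thesis by (auto simp: binary_entropy_def)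
next
  case False
  then have p: "0 < p" "p < 1" using assms by auto
  define x where "x = \<bar>2*p-1\<bar>"
  have x: "0 \<le> x" "x < 1" using p by (auto simp: x_def)
  have HHx: "HH x = HH (2*p-1)" unfolding x_def by (cases "2*p-1 \<ge> 0") (auto simp: HH_even[of "2*p-1", symmetric])
  have q: "(1-x)*(1+x) = 4 * p * (1-p)"
  proof -
    have "(1-x)*(1+x) = 1 - x^2" by (simp add: algebra_simps power2_eq_square)
    also have "x^2 = (2*p-1)^2" by (simp add: x_def)
    finally show ?thesis by (simp add: algebra_simps power2_eq_square)
  qed
  have h: "binary_entropy p = HH x / ln 2" using be_eq[OF p] HHx by simp
  have hpos: "HH x / ln 2 > 0" using HH_pos[of x] x by simp
  have "phi x \<ge> 0" using phi_nonneg x by auto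
  then have l: "ln (HH x / ln 2) \<le> cc * ln (4 * p * (1-p))" unfolding phi_def q by simp
  have "binary_entropy p powr ln 4 = exp (ln 4 * ln (HH x / ln 2))"
    using hpos h HH_pos[of x] x by (simp add: powr_def)
  also have "\<dots> \<le> exp (ln 4 * (cc * ln (4 * p * (1-p))))"
    using l by (simp add: ln4)
  also have "ln 4 * (cc * ln (4 * p * (1-p))) = ln (4 * p * (1-p))"
    by (simp add: ln4 cc_def)
  also have "exp (ln (4 * p * (1-p))) = 4 * p * (1-p)" using p by simp
  finally show ?thesis .
qed

theorem lemma2:
  fixes p :: real
  assumes "0 \<le> p" and "p \<le> 1"
  shows "p \<le> (1 + sqrt (1 - binary_entropy p powr ln 4)) / 2"
proof -
  have "1 - binary_entropy p powr ln 4 \<ge> (2*p-1)^2"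
    using main_ineq[OF assms] by (simp add: algebra_simps power2_eq_square)
  then have "sqrt (1 - binary_entropy p powr ln 4) \<ge> sqrt ((2*p-1)^2)"
    using real_sqrt_le_mono by blast
  moreover have "sqrt ((2*p-1)^2) \<ge> 2*p-1" by simp
  ultimately have "2*p-1 \<le> sqrt (1 - binary_entropy p powr ln 4)" by (rule order_trans[rotated])
  then show ?thesis by simp
qed

end
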